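(* Let $\Lambda$ and $\Lambda'$ be any permutation local limits. Then there exists a sequence of permutations $(\varphi_j)_{j\in\mathbb{N}}$ that converges locally to $\Lambda$ such that the sequence of inverse permutations $(\varphi_j^{-1})_{j\in\mathbb{N}}$ converges locally to $\Lambda'$.
   Context: Let $S$ be the set of all finite permutations. For $\pi\in S_k$ and $\sigma\in S_n$ with $k\le n$, the local density $\rho_k(\pi,\sigma)$ is the number of $i\in\{1,\dots,n-k+1\}$ such that $\sigma(i)\dots\sigma(i+k-1)$ is order-isomorphic to $\pi$, divided by $n-k+1$. A sequence $(\sigma_j)$ with $|\sigma_j|\to\infty$ converges locally to $\Lambda\in[0,1]^S$ if $\rho_{|\pi|}(\pi,\sigma_j)\to\Lambda_\pi$ for every $\pi\in S$. A permutation local limit is a vector $\Lambda\in[0,1]^S$ which is the local limit of some locally convergent sequence of permutations. $\varphi^{-1}$ denotes the inverse permutation. *)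

theory Defs
  imports Complex_Main
begin

text \<open>A permutation of size n is represented as the list
  [sigma(1), ..., sigma(n)] shifted to values in {0..<n}; the set S of all
  finite permutations is the set of lists satisfying is_perm.\<close>

definition is_perm :: "nat list \<Rightarrow> bool" where
  "is_perm xs \<longleftrightarrow> distinct xs \<and> set xs = {0..<length xs}"

definition perm_inv :: "nat list \<Rightarrow> nat list" where
  "perm_inv s = map (\<lambda>v. THE i. i < length s \<and> s ! i = v) [0..<length s]"

definition occurs_at :: "nat list \<Rightarrow> nat list \<Rightarrow> nat \<Rightarrow> bool" where
  "occurs_at p s i \<longleftrightarrow> i + length p \<le> length s \<and>
     (\<forall>a < length p. \<forall>b < length p. (s ! (i + a) < s ! (i + b)) \<longleftrightarrow> (p ! a < p ! b))"

text \<open>Local density rho_k(p, s) with k = length p (meaningful for k \<le> length s).\<close>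
definition local_density :: "nat list \<Rightarrow> nat list \<Rightarrow> real" where
  "local_density p s =
     real (card {i. i + length p \<le> length s \<and> occurs_at p s i}) /
     real (length s - length p + 1)"

definition converges_locally :: "(nat \<Rightarrow> nat list) \<Rightarrow> (nat list \<Rightarrow> real) \<Rightarrow> bool" where
  "converges_locally sq L \<longleftrightarrow>
     (\<forall>j. is_perm (sq j)) \<and>
     filterlim (\<lambda>j. length (sq j)) at_top sequentially \<and>
     (\<forall>p. is_perm p \<longrightarrow> (\<lambda>j. local_density p (sq j)) \<longlonglongrightarrow> L p)"

definition perm_local_limit :: "(nat list \<Rightarrow> real) \<Rightarrow> bool" where
  "perm_local_limit L \<longleftrightarrow> (\<exists>sq. converges_locally sq L)"

end

theory Submission
  imports Defs
begin


lemma perm_inv_length[simp]: "length (perm_inv s) = length s"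
  by (simp add: perm_inv_def)

lemma perm_inv_nth:
  assumes "is_perm s" "v < length s"
  shows "perm_inv s ! v < length s \<and> s ! (perm_inv s ! v) = v"
proof -
  have ex: "\<exists>!i. i < length s \<and> s ! i = v"
  proof -
    have "v \<in> set s" using assms by (simp add: is_perm_def)
    then obtain i where "i < length s" "s ! i = v" by (auto simp: in_set_conv_nth)
    moreover have "\<And>j. j < length s \<Longrightarrow> s ! j = v \<Longrightarrow> j = i"
      using assms(1) calculation by (metis is_perm_def nth_eq_iff_index_eq)
    ultimately show ?thesis by blast
  qed
  have "perm_inv s ! v = (THE i. i < length s \<and> s ! i = v)"
    using assms(2) by (simp add: perm_inv_def)
  with theI'[OF ex] show ?thesis by simp
qed

lemma perm_inv_nth2:
  assumes "is_perm s" "i < length s"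
  shows "perm_inv s ! (s ! i) = i"
proof -
  have "s ! i < length s" using assms by (auto simp: is_perm_def)
  from perm_inv_nth[OF assms(1) this] assms show ?thesis
    by (metis is_perm_def nth_eq_iff_index_eq)
qed

lemma is_permI:
  assumes "length xs = N" "\<And>i. i < N \<Longrightarrow> xs ! i < N"
    "\<And>i j. i < N \<Longrightarrow> j < N \<Longrightarrow> xs ! i = xs ! j \<Longrightarrow> i = j"
  shows "is_perm xs"
proof -
  have d: "distinct xs" using assms by (auto simp: distinct_conv_nth)
  have sub: "set xs \<subseteq> {0..<N}" using assms by (auto simp: in_set_conv_nth)
  have "card (set xs) = N" using d assms(1) by (simp add: distinct_card)
  then have "set xs = {0..<N}" using sub by (simp add: card_subset_eq)
  with d assms(1) show ?thesis by (simp add: is_perm_def)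
qed

lemma is_perm_inv: assumes "is_perm s" shows "is_perm (perm_inv s)"
proof (rule is_permI[where N="length s"])
  fix i j assume "i < length s" "j < length s" "perm_inv s ! i = perm_inv s ! j"
  then show "i = j" using perm_inv_nth[OF assms] by metis
qed (use perm_inv_nth[OF assms] in auto)

lemma occurs_block:
  assumes len: "length s = n*m" "length \<sigma> = m"
    and blk: "\<And>a b b'. a<n \<Longrightarrow> b<m \<Longrightarrow> b'<m \<Longrightarrow> (s!(a*m+b) < s!(a*m+b')) = (\<sigma>!b < \<sigma>!b')"
    and a: "a<n" and b: "b + length p \<le> m"
  shows "occurs_at p s (a*m+b) = occurs_at p \<sigma> b"
proof -
  have "(a+1)*m \<le> n*m" using a by (intro mult_le_mono1) simp
  then have "a*m + b + length p \<le> length s" using b len by simp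
  moreover have "\<forall>x<length p. \<forall>y<length p. (s!(a*m+b+x) < s!(a*m+b+y)) = (\<sigma>!(b+x) < \<sigma>!(b+y))"
    using blk[OF a] b by (simp add: add.assoc)
  ultimately show ?thesis using b len by (simp add: occurs_at_def)
qed

lemma divmod_eq: "b < (m::nat) \<Longrightarrow> (a*m+b) div m = a \<and> (a*m+b) mod m = b"
  by auto



lemma count_bounds:
  assumes len: "length s = n*m" "length \<sigma> = m"
    and blk: "\<And>a b b'. a<n \<Longrightarrow> b<m \<Longrightarrow> b'<m \<Longrightarrow> (s!(a*m+b) < s!(a*m+b')) = (\<sigma>!b < \<sigma>!b')"
    and k: "length p = k" "k \<ge> 1"
  shows "n * card {i. i + k \<le> m \<and> occurs_at p \<sigma> i} \<le> card {i. i + k \<le> length s \<and> occurs_at p s i}"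
    "card {i. i + k \<le> length s \<and> occurs_at p s i} \<le> n * card {i. i + k \<le> m \<and> occurs_at p \<sigma> i} + n * k"
proof -
  define f where "f = (\<lambda>(a::nat,b::nat). a*m+b)"
  define CS where "CS = {i. i + k \<le> m \<and> occurs_at p \<sigma> i}"
  define XS where "XS = {i. i + k \<le> length s \<and> occurs_at p s i}"
  define A where "A = {..<n} \<times> CS"
  define B where "B = {..<n} \<times> {b. b < m \<and> m < b + k}"
  have finCS: "finite CS" unfolding CS_def by (rule finite_subset[of _ "{..m}"]) auto
  have finXS: "finite XS" unfolding XS_def by (rule finite_subset[of _ "{..length s}"]) auto
  have finB2: "finite {b. b < m \<and> m < b + k}" by (rule finite_subset[of _ "{..<m}"]) auto
  have inj: "inj_on f A"
  proof (rule inj_onI)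
    fix x y assume "x \<in> A" "y \<in> A" "f x = f y"
    then obtain a b a' b' where "x = (a,b)" "y = (a',b')" "b < m" "b' < m" "a*m+b = a'*m+b'"
      unfolding A_def CS_def f_def using k by fastforce
    then show "x = y" using divmod_eq by metis
  qed
  have "f ` A \<subseteq> XS"
  proof
    fix i assume "i \<in> f ` A"
    then obtain a b where ab: "a < n" "b + k \<le> m" "occurs_at p \<sigma> b" "i = a*m+b"
      unfolding A_def CS_def f_def by auto
    have "(a+1)*m \<le> n*m" using ab by (intro mult_le_mono1) simp
    then have "i + k \<le> length s" using ab len by simp
    moreover have "occurs_at p s i" using occurs_block[OF len blk ab(1)] ab k by simp
    ultimately show "i \<in> XS" unfolding XS_def by simp
  qed
  then have "card (f ` A) \<le> card XS" using finXS by (simp add: card_mono)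
  moreover have "card (f ` A) = n * card CS" using card_image[OF inj] by (simp add: A_def card_cartesian_product)
  ultimately show "n * card CS \<le> card XS" by simp
  have "XS \<subseteq> f ` A \<union> f ` B"
  proof
    fix i assume "i \<in> XS"
    then have i: "i + k \<le> n*m" "occurs_at p s i" unfolding XS_def using len by auto
    then have m0: "m > 0" using k by (cases "m = 0") auto
    define a where "a = i div m"
    define b where "b = i mod m"
    have iab: "i = a*m+b" unfolding a_def b_def by simp
    have bm: "b < m" unfolding b_def using m0 by simp
    have "i < n*m" using i k by linarith
    then have an: "a < n" unfolding a_def using m0
      by (simp add: div_less_iff_less_mult)
    show "i \<in> f ` A \<union> f ` B"
    proof (cases "b + k \<le> m")
      case True
      then have "occurs_at p \<sigma> b" using occurs_block[OF len blk an] k i iab by simp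
      then have "(a,b) \<in> A" unfolding A_def CS_def using an True by simp
      then show ?thesis using iab unfolding f_def by force
    next
      case False
      then have "(a,b) \<in> B" unfolding B_def using an bm by simp
      then show ?thesis using iab unfolding f_def by force
    qed
  qed
  then have "card XS \<le> card (f ` A \<union> f ` B)"
    using finCS finB2 by (intro card_mono) (auto simp: A_def B_def)
  also have "\<dots> \<le> card (f ` A) + card (f ` B)" by (rule card_Un_le)
  also have "\<dots> \<le> card A + card B" by (intro add_mono card_image_le) (auto simp: A_def B_def finCS finB2)
  also have "card B \<le> n * k"
  proof -
    have "{b. b < m \<and> m < b + k} \<subseteq> {m-k..<m}" by auto
    then have "card {b. b < m \<and> m < b + k} \<le> card {m-k..<m}" by (intro card_mono) auto
    then have "card {b. b < m \<and> m < b + k} \<le> k" by simp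
    then show ?thesis unfolding B_def by (simp add: card_cartesian_product)
  qed
  finally show "card XS \<le> n * card CS + n * k" by (simp add: A_def card_cartesian_product)
qed



lemma real_bound:
  fixes X C n m k :: real
  assumes "n \<ge> 1" "k \<ge> 1" "m \<ge> k" "C \<ge> 0" "C \<le> m-k+1" "n*C \<le> X" "X \<le> n*C + n*k"
  shows "\<bar>X/(n*m-k+1) - C/(m-k+1)\<bar> \<le> k/(m-k+1)"
proof -
  define M where "M = m-k+1"
  define D where "D = n*m-k+1"
  have M1: "M \<ge> 1" using assms unfolding M_def by simp
  have e: "D - n*M = (n-1)*(k-1)" unfolding D_def M_def by (simp add: algebra_simps)
  have "(n-1)*(k-1) \<ge> 0" using assms by simp
  then have DM: "D \<ge> n*M" using e by linarith
  have Dm: "D \<le> n*m" unfolding D_def using assms by simp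
  have Mm: "M \<le> m" unfolding M_def using assms by simp
  have "n*M \<ge> 1*M" using assms M1 by (intro mult_right_mono) auto
  then have Dp: "D > 0" using DM M1 by linarith
  have np: "n > 0" using assms by simp
  have up: "X/D \<le> (C+k)/M"
  proof -
    have "X/D \<le> (n*C+n*k)/D" using assms Dp by (simp add: divide_right_mono)
    also have "\<dots> \<le> (n*C+n*k)/(n*M)" using DM M1 assms np Dp
      by (intro divide_left_mono) auto
    also have "\<dots> = (C+k)/M" using np by (simp add: distrib_left[symmetric])
    finally show ?thesis .
  qed
  have lo: "X/D \<ge> C/m"
  proof -
    have "C/m = (n*C)/(n*m)" using np by simp
    also have "\<dots> \<le> (n*C)/D" using assms Dp Dm np by (intro divide_left_mono) auto
    also have "\<dots> \<le> X/D" using assms Dp by (simp add: divide_right_mono)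
    finally show ?thesis .
  qed
  have mp: "m > 0" using assms by simp
  have "C/M - C/m = C*(m-M)/(m*M)" using M1 mp by (simp add: diff_divide_distrib right_diff_distrib)
  also have "m - M = k - 1" unfolding M_def by simp
  also have "C*(k-1)/(m*M) \<le> M*(k-1)/(m*M)" using assms M1 mp unfolding M_def
    by (intro divide_right_mono mult_right_mono) auto
  also have "\<dots> = (k-1)/m" using M1 by simp
  also have "\<dots> \<le> k/m" using mp by (simp add: divide_right_mono)
  also have "\<dots> \<le> k/M" using M1 Mm assms by (intro divide_left_mono) auto
  finally have l2: "C/M - C/m \<le> k/M" .
  have "(C+k)/M = C/M + k/M" by (simp add: add_divide_distrib)
  then show ?thesis using up lo l2 unfolding M_def[symmetric] D_def[symmetric] by linarith
qed



lemma density_nil: "local_density [] s = 1"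
proof -
  have "{i. i + length [] \<le> length s \<and> occurs_at [] s i} = {..length s}"
    by (auto simp: occurs_at_def)
  then show ?thesis by (simp add: local_density_def)
qed

lemma block_density:
  assumes len: "length s = n*m" "length \<sigma> = m"
    and blk: "\<And>a b b'. a<n \<Longrightarrow> b<m \<Longrightarrow> b'<m \<Longrightarrow> (s!(a*m+b) < s!(a*m+b')) = (\<sigma>!b < \<sigma>!b')"
    and n1: "n \<ge> 1" and km: "length p \<le> m"
  shows "\<bar>local_density p s - local_density p \<sigma>\<bar> \<le> real (length p) / real (m - length p + 1)"
proof (cases "length p = 0")
  case True
  then show ?thesis by (simp add: density_nil)
next
  case False
  define k where "k = length p"
  have k1: "k \<ge> 1" using False k_def by linarith
  define X where "X = card {i. i + k \<le> length s \<and> occurs_at p s i}"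
  define C where "C = card {i. i + k \<le> m \<and> occurs_at p \<sigma> i}"
  have b1: "n * C \<le> X" and b2: "X \<le> n*C + n*k"
    using count_bounds[OF len blk k_def[symmetric] k1] unfolding X_def C_def by auto
  have "C \<le> card {0..m-k}" unfolding C_def by (intro card_mono) auto
  then have Cm: "C \<le> m - k + 1" using km k_def by simp
  have "k \<le> n*m" using km k_def n1
    by (metis le_trans mult_1 mult_le_mono1)
  then have rD: "real (length s - k + 1) = real n * real m - real k + 1" using len by (simp add: of_nat_diff)
  have rM: "real (m - k + 1) = real m - real k + 1" using km k_def by (simp add: of_nat_diff)
  have "\<bar>real X/(real n*real m-real k+1) - real C/(real m-real k+1)\<bar> \<le> real k/(real m-real k+1)"
  proof (rule real_bound)
    show "real n * real C \<le> real X" using b1 by (metis of_nat_le_iff of_nat_mult)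
    show "real X \<le> real n * real C + real n * real k" using b2 by (metis of_nat_add of_nat_le_iff of_nat_mult)
    show "real C \<le> real m - real k + 1" using Cm rM by (metis of_nat_le_iff)
  qed (use n1 k1 km k_def in auto)
  moreover have "local_density p s = real X / (real n*real m - real k + 1)"
    unfolding local_density_def X_def k_def[symmetric] using rD by simp
  moreover have "local_density p \<sigma> = real C / (real m - real k + 1)"
    unfolding local_density_def C_def k_def[symmetric] using rM len by simp
  ultimately show ?thesis using rM k_def by (simp only: k_def)
qed

lemma conv_transfer:
  assumes perm: "\<And>j. is_perm (s j)"
    and lens: "filterlim (\<lambda>j. length (s j)) at_top sequentially"
    and cinf: "filterlim c at_top sequentially"
    and len: "\<And>j. length (s j) = c j * length (t j)"
    and blk: "\<And>j a b b'. a < c j \<Longrightarrow> b < length (t j) \<Longrightarrow> b' < length (t j) \<Longrightarrow>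
       (s j!(a*length(t j)+b) < s j!(a*length (t j)+b')) = (t j!b < t j!b')"
    and conv: "converges_locally t L"
  shows "converges_locally s L"
  unfolding converges_locally_def
proof (intro conjI allI impI)
  show "is_perm (s j)" for j by (rule perm)
  show "filterlim (\<lambda>j. length (s j)) at_top sequentially" by (rule lens)
  fix p assume pp: "is_perm p"
  define k where "k = length p"
  have tinf: "filterlim (\<lambda>j. length (t j)) at_top sequentially" using conv by (simp add: converges_locally_def)
  have tL: "(\<lambda>j. local_density p (t j)) \<longlonglongrightarrow> L p" using conv pp by (simp add: converges_locally_def)
  define g where "g j = real k / real (length (t j) - k + 1)" for j
  have ev1: "eventually (\<lambda>j. c j \<ge> 1) sequentially" using cinf by (simp add: filterlim_at_top)
  have ev2: "eventually (\<lambda>j. length (t j) \<ge> k) sequentially" using tinf by (simp add: filterlim_at_top)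
  have evb: "eventually (\<lambda>j. \<bar>local_density p (s j) - local_density p (t j)\<bar> \<le> g j) sequentially"
    using ev1 ev2 proof eventually_elim
    case (elim j)
    show ?case unfolding g_def k_def
      by (rule block_density[OF len refl blk]) (use elim k_def in auto)
  qed
  have "filterlim (\<lambda>j. length (t j) - k + 1) at_top sequentially"
    unfolding filterlim_at_top
  proof
    fix Z
    have "eventually (\<lambda>j. length (t j) \<ge> Z + k) sequentially" using tinf by (simp add: filterlim_at_top)
    then show "eventually (\<lambda>j. Z \<le> length (t j) - k + 1) sequentially" by eventually_elim auto
  qed
  then have "filterlim (\<lambda>j. real (length (t j) - k + 1)) at_top sequentially"
    using filterlim_compose[OF filterlim_real_sequentially] by blast
  then have g0: "g \<longlonglongrightarrow> 0" unfolding g_def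
    by (intro tendsto_divide_0[OF tendsto_const] filterlim_at_top_imp_at_infinity)
  have "(\<lambda>j. local_density p (s j) - local_density p (t j)) \<longlonglongrightarrow> 0"
  proof (rule real_tendsto_sandwich[where f="\<lambda>j. - g j" and h=g])
    show "eventually (\<lambda>j. - g j \<le> local_density p (s j) - local_density p (t j)) sequentially"
      using evb by eventually_elim auto
    show "eventually (\<lambda>j. local_density p (s j) - local_density p (t j) \<le> g j) sequentially"
      using evb by eventually_elim auto
    show "(\<lambda>j. - g j) \<longlonglongrightarrow> 0" using tendsto_minus[OF g0] by simp
  qed (rule g0)
  from tendsto_add[OF this tL] show "(\<lambda>j. local_density p (s j)) \<longlonglongrightarrow> L p" by simp
qed



definition mk :: "nat list \<Rightarrow> nat list \<Rightarrow> nat list" where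
  "mk \<sigma> \<tau> = map (\<lambda>i. \<sigma>!(i mod length \<sigma>) * length \<tau> + perm_inv \<tau> ! (i div length \<sigma>)) [0..<length \<tau> * length \<sigma>]"

lemma mk_length[simp]: "length (mk \<sigma> \<tau>) = length \<tau> * length \<sigma>"
  by (simp add: mk_def)

lemma mk_nth: "i < length \<tau> * length \<sigma> \<Longrightarrow> mk \<sigma> \<tau> ! i = \<sigma>!(i mod length \<sigma>) * length \<tau> + perm_inv \<tau> ! (i div length \<sigma>)"
  by (simp add: mk_def)

lemma mk_nth2:
  assumes "a < length \<tau>" "b < length \<sigma>"
  shows "mk \<sigma> \<tau> ! (a * length \<sigma> + b) = \<sigma>!b * length \<tau> + perm_inv \<tau> ! a"
proof -
  have "(a+1) * length \<sigma> \<le> length \<tau> * length \<sigma>" using assms by (intro mult_le_mono1) simp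
  then have "a * length \<sigma> + b < length \<tau> * length \<sigma>" using assms by simp
  then show ?thesis using mk_nth divmod_eq[OF assms(2)] by metis
qed

lemma mk_perm:
  assumes ps: "is_perm \<sigma>" and pt: "is_perm \<tau>"
  shows "is_perm (mk \<sigma> \<tau>)"
proof (rule is_permI[where N="length \<tau> * length \<sigma>"])
  let ?m = "length \<sigma>" and ?n = "length \<tau>"
  have sv: "\<And>b. b < ?m \<Longrightarrow> \<sigma>!b < ?m" using ps by (auto simp: is_perm_def)
  have tv: "\<And>a. a < ?n \<Longrightarrow> perm_inv \<tau>!a < ?n" using perm_inv_nth[OF pt] by auto
  have dec: "\<And>i. i < ?n * ?m \<Longrightarrow> i mod ?m < ?m \<and> i div ?m < ?n"
    by (metis div_less_iff_less_mult mod_less_divisor mult.commute not_gr_zero mult_0 not_less0)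
  show "mk \<sigma> \<tau> ! i < ?n * ?m" if "i < ?n * ?m" for i
  proof -
    have "\<sigma>!(i mod ?m) + 1 \<le> ?m" "perm_inv \<tau> ! (i div ?m) < ?n" using sv tv dec that by force+
    then have "\<sigma>!(i mod ?m) * ?n + perm_inv \<tau> ! (i div ?m) < (\<sigma>!(i mod ?m) + 1) * ?n" by simp
    also have "\<dots> \<le> ?m * ?n" using \<open>\<sigma>!(i mod ?m) + 1 \<le> ?m\<close> by (rule mult_le_mono1)
    finally show ?thesis using mk_nth[OF that] by (simp add: mult.commute)
  qed
  show "i = j" if "i < ?n * ?m" "j < ?n * ?m" "mk \<sigma> \<tau> ! i = mk \<sigma> \<tau> ! j" for i j
  proof -
    have e: "\<sigma>!(i mod ?m) * ?n + perm_inv \<tau> ! (i div ?m) = \<sigma>!(j mod ?m) * ?n + perm_inv \<tau> ! (j div ?m)"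
      using that mk_nth by metis
    have "perm_inv \<tau> ! (i div ?m) < ?n" "perm_inv \<tau> ! (j div ?m) < ?n" using tv dec that by auto
    with e have e1: "\<sigma>!(i mod ?m) = \<sigma>!(j mod ?m)" and e2: "perm_inv \<tau> ! (i div ?m) = perm_inv \<tau> ! (j div ?m)"
      using divmod_eq by metis+
    have "i mod ?m = j mod ?m" using e1 ps dec that by (metis is_perm_def nth_eq_iff_index_eq)
    moreover have "i div ?m = j div ?m" using e2 is_perm_inv[OF pt] dec that
      by (metis is_perm_def nth_eq_iff_index_eq perm_inv_length)
    ultimately show "i = j" by (metis div_mult_mod_eq)
  qed
qed simp

lemma mk_inv_nth:
  assumes ps: "is_perm \<sigma>" and pt: "is_perm \<tau>" and c: "c < length \<sigma>" and d: "d < length \<tau>"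
  shows "perm_inv (mk \<sigma> \<tau>) ! (c * length \<tau> + d) = \<tau>!d * length \<sigma> + perm_inv \<sigma> ! c"
proof -
  let ?m = "length \<sigma>" and ?n = "length \<tau>"
  have a: "\<tau>!d < ?n" using pt d by (auto simp: is_perm_def)
  have b: "perm_inv \<sigma> ! c < ?m" and sb: "\<sigma> ! (perm_inv \<sigma> ! c) = c" using perm_inv_nth[OF ps c] by auto
  have "(\<tau>!d + 1) * ?m \<le> ?n * ?m" using a by (intro mult_le_mono1) simp
  then have ilt: "\<tau>!d * ?m + perm_inv \<sigma> ! c < ?n * ?m" using b by simp
  have "mk \<sigma> \<tau> ! (\<tau>!d * ?m + perm_inv \<sigma> ! c) = c * ?n + d"
    using mk_nth2[OF a b] sb perm_inv_nth2[OF pt d] by simp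
  then show ?thesis using perm_inv_nth2[OF mk_perm[OF ps pt], of "\<tau>!d * ?m + perm_inv \<sigma> ! c"] ilt by simp
qed

theorem mainTheorem11:
  fixes L L' :: "nat list \<Rightarrow> real"
  assumes "perm_local_limit L" and "perm_local_limit L'"
  shows "\<exists>phi. converges_locally phi L \<and> converges_locally (\<lambda>j. perm_inv (phi j)) L'"
proof -
  obtain sq where sq: "converges_locally sq L" using assms(1) perm_local_limit_def by blast
  obtain tq where tq: "converges_locally tq L'" using assms(2) perm_local_limit_def by blast
  have ps: "\<And>j. is_perm (sq j)" and pt: "\<And>j. is_perm (tq j)"
    using sq tq by (auto simp: converges_locally_def)
  have ms: "filterlim (\<lambda>j. length (sq j)) at_top sequentially"
    and ns: "filterlim (\<lambda>j. length (tq j)) at_top sequentially"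
    using sq tq by (auto simp: converges_locally_def)
  have evm: "eventually (\<lambda>j. length (sq j) \<ge> 1) sequentially" using ms by (simp add: filterlim_at_top)
  have evn: "eventually (\<lambda>j. length (tq j) \<ge> 1) sequentially" using ns by (simp add: filterlim_at_top)
  define phi where "phi j = mk (sq j) (tq j)" for j
  have lm: "filterlim (\<lambda>j. length (phi j)) at_top sequentially"
    by (rule filterlim_at_top_mono[OF ms]) (use evn in \<open>eventually_elim, simp add: phi_def\<close>)
  have ln: "filterlim (\<lambda>j. length (phi j)) at_top sequentially"
    by (rule filterlim_at_top_mono[OF ns]) (use evm in \<open>eventually_elim, simp add: phi_def\<close>)
  have c1: "converges_locally phi L"
  proof (rule conv_transfer[where t=sq and c="\<lambda>j. length (tq j)"])
    show "is_perm (phi j)" for j using mk_perm[OF ps pt] by (simp add: phi_def)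
    show "length (phi j) = length (tq j) * length (sq j)" for j by (simp add: phi_def)
    show "(phi j ! (a * length (sq j) + b) < phi j ! (a * length (sq j) + b')) = (sq j ! b < sq j ! b')"
      if "a < length (tq j)" "b < length (sq j)" "b' < length (sq j)" for j a b b'
      using mk_nth2[OF that(1,2)] mk_nth2[OF that(1,3)] that by (auto simp: phi_def)
  qed (use lm ns sq in auto)
  have c2: "converges_locally (\<lambda>j. perm_inv (phi j)) L'"
  proof (rule conv_transfer[where t=tq and c="\<lambda>j. length (sq j)"])
    show "is_perm (perm_inv (phi j))" for j using is_perm_inv[OF mk_perm[OF ps pt]] by (simp add: phi_def)
    show "length (perm_inv (phi j)) = length (sq j) * length (tq j)" for j by (simp add: phi_def)
    show "filterlim (\<lambda>j. length (perm_inv (phi j))) at_top sequentially" using ln by simp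
    show "(perm_inv (phi j) ! (a * length (tq j) + b) < perm_inv (phi j) ! (a * length (tq j) + b')) = (tq j ! b < tq j ! b')"
      if "a < length (sq j)" "b < length (tq j)" "b' < length (tq j)" for j a b b'
      using mk_inv_nth[OF ps pt that(1,2)] mk_inv_nth[OF ps pt that(1,3)] that by (auto simp: phi_def)
  qed (use ms tq in auto)
  from c1 c2 show ?thesis by blast
qed


end
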